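(* Let $d\ge 2$ and $p\ge 2$ be integers and let $X\in\mathcal{A}^d_{p,p}$. Put $\widetilde X:=\operatorname{tr}_{2,\ldots,2p-1}\big(XV^{(p-1)}\big)$, an operator on systems $1$ and $2p$. Then $\widetilde X\in\mathcal{A}^d_{1,1}$ (as an operator on systems $1,2p$), and $$V^{(p-1)}XV^{(p-1)}=\widetilde X\otimes \prod_{k=1}^{p-1}W_{p+1-k,\,p+k},$$ where the first factor acts on systems $1,2p$ and the second on systems $2,\ldots,2p-1$.
   Context: Consider $(\mathbb{C}^d)^{\otimes 2p}$ with tensor factors (systems) labelled $1,\ldots,2p$. For distinct systems $a,b$ let $W_{a,b}=\sum_{i,j=1}^d |i\rangle\langle j|_a\otimes |i\rangle\langle j|_b$ (the partial transpose on system $b$ of the swap of $a$ and $b$; it equals $d$ times the projector onto the maximally entangled state of $a,b$), extended by the identity on the other systems. Define $V^{(p-1)}=\prod_{k=1}^{p-1}W_{p+1-k,\,p+k}$ (identity on systems $1$ and $2p$). For $\pi$ in the symmetric group $\mathcal{S}_{2p}$ let $V_\pi$ be the operator permuting the $2p$ tensor factors according to $\pi$. The algebra of partially transposed permutation operators is $\mathcal{A}^d_{p,p}=\operatorname{span}_{\mathbb{C}}\{V_\pi^{t_{p+1}\circ\cdots\circ t_{2p}}:\pi\in\mathcal{S}_{2p}\}$, where $t_k$ is the partial transposition (in the standard basis) on system $k$. Analogously $\mathcal{A}^d_{1,1}$ on two systems $a,b$ is $\operatorname{span}\{\mathbb{1},W_{a,b}\}$. *)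

theory Defs
  imports Complex_Main "HOL-Library.FuncSet" "HOL-Combinatorics.Permutations"
begin

text \<open>Operators on a tensor product of copies of C^d indexed by a finite set S of
systems are represented by their matrix entries: a multi-index is a function
assigning to each system k in S a basis label in {0..<d} (and undefined outside S).\<close>

type_synonym mi = "nat \<Rightarrow> nat"
type_synonym op = "mi \<Rightarrow> mi \<Rightarrow> complex"

definition idx :: "nat set \<Rightarrow> nat \<Rightarrow> mi set" where
  "idx S d = PiE S (\<lambda>_. {..<d})"

definition opmult :: "nat set \<Rightarrow> nat \<Rightarrow> op \<Rightarrow> op \<Rightarrow> op" where
  "opmult S d A B = (\<lambda>i j. \<Sum>k\<in>idx S d. A i k * B k j)"

definition ident :: "nat set \<Rightarrow> op" where
  "ident S = (\<lambda>i j. if (\<forall>k\<in>S. i k = j k) then 1 else 0)"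

text \<open>W_{a,b} = sum_{i,j} |i><j|_a (x) |i><j|_b, extended by the identity on S - {a,b}.\<close>
definition Wop :: "nat set \<Rightarrow> nat \<Rightarrow> nat \<Rightarrow> op" where
  "Wop S a b = (\<lambda>i j. if i a = i b \<and> j a = j b \<and> (\<forall>k\<in>S-{a,b}. i k = j k) then 1 else 0)"

text \<open>Permutation operator: moves tensor factor k to position pi k.\<close>
definition permop :: "nat set \<Rightarrow> (nat \<Rightarrow> nat) \<Rightarrow> op" where
  "permop S \<pi> = (\<lambda>i j. if (\<forall>k\<in>S. i (\<pi> k) = j k) then 1 else 0)"

definition ptrans1 :: "nat \<Rightarrow> op \<Rightarrow> op" where
  "ptrans1 k X = (\<lambda>i j. X (i(k := j k)) (j(k := i k)))"

definition Vprod :: "nat set \<Rightarrow> nat \<Rightarrow> nat \<Rightarrow> op" where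
  "Vprod S d p = fold (\<lambda>k A. opmult S d A (Wop S (p+1-k) (p+k))) [1..<p] (ident S)"

definition ptrace :: "nat set \<Rightarrow> nat \<Rightarrow> op \<Rightarrow> op" where
  "ptrace T d Y = (\<lambda>i j. \<Sum>m\<in>idx T d.
      Y (\<lambda>k. if k \<in> T then m k else i k) (\<lambda>k. if k \<in> T then m k else j k))"

definition optensor :: "nat set \<Rightarrow> nat set \<Rightarrow> op \<Rightarrow> op \<Rightarrow> op" where
  "optensor S1 S2 A B = (\<lambda>i j. A (restrict i S1) (restrict j S1) * B (restrict i S2) (restrict j S2))"

text \<open>Membership in A^d_{p,p} = span of the partially transposed permutation operators
(transposition on systems p+1..2p), as an operator on systems 1..2p.\<close>
definition in_Apq :: "nat \<Rightarrow> nat \<Rightarrow> op \<Rightarrow> bool" where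
  "in_Apq d p X \<longleftrightarrow> (\<exists>c :: (nat \<Rightarrow> nat) \<Rightarrow> complex.
     \<forall>i\<in>idx {1..2*p} d. \<forall>j\<in>idx {1..2*p} d.
       X i j = (\<Sum>\<pi>\<in>{\<pi>. \<pi> permutes {1..2*p}}.
                  c \<pi> * fold ptrans1 [p+1..<2*p+1] (permop {1..2*p} \<pi>) i j))"

definition in_A11 :: "nat set \<Rightarrow> nat \<Rightarrow> nat \<Rightarrow> nat \<Rightarrow> op \<Rightarrow> bool" where
  "in_A11 S a b d X \<longleftrightarrow> (\<exists>\<alpha> \<beta> :: complex.
     \<forall>i\<in>idx S d. \<forall>j\<in>idx S d. X i j = \<alpha> * ident S i j + \<beta> * Wop S a b i j)"

end

theory Submission
  imports Defs
begin

definition vl :: "'n set \<Rightarrow> ('n \<Rightarrow> nat) \<Rightarrow> ('n \<Rightarrow> nat) \<Rightarrow> 'n \<Rightarrow> nat" where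
  "vl I w ext n = (if n \<in> I then w n else ext n)"

lemma sum_PiE_insert:
  assumes "v \<notin> I"
  shows "(\<Sum>w\<in>PiE (insert v I) T. F w) = (\<Sum>u\<in>T v. \<Sum>w\<in>PiE I T. F (w(v:=u)))"
proof -
  have "(\<Sum>w\<in>PiE (insert v I) T. F w) = (\<Sum>x\<in>T v \<times> PiE I T. F ((\<lambda>(y, g). g(v := y)) x))"
    unfolding PiE_insert_eq by (subst sum.reindex[OF inj_combinator[OF assms]]) (simp add: o_def)
  also have "\<dots> = (\<Sum>u\<in>T v. \<Sum>w\<in>PiE I T. F (w(v:=u)))"
    by (simp add: sum.cartesian_product split_def)
  finally show ?thesis .
qed

lemma sum_ind:
  assumes "(A::nat) < d"
  shows "(\<Sum>u<d. if u = A \<and> P then 1 else 0 :: complex) = (if P then 1 else 0)"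
  using assms by (cases P) (simp_all add: sum.delta)

lemma graph_elim:
  fixes I :: "'n set" and E :: "'e set" and f g :: "'e \<Rightarrow> 'n"
  assumes "finite I"
  shows "finite E \<Longrightarrow> inj_on f E \<Longrightarrow> inj_on g E \<Longrightarrow> f ` E = I \<union> Src \<Longrightarrow> g ` E = I \<union> Snk
    \<Longrightarrow> I \<inter> Src = {} \<Longrightarrow> I \<inter> Snk = {} \<Longrightarrow>
    \<exists>c h. bij_betw h Src Snk \<and> (\<forall>ext. (\<forall>x\<in>Src \<union> Snk. ext x < d) \<longrightarrow>
      (\<Sum>w\<in>PiE I (\<lambda>_. {..<d}). (if \<forall>e\<in>E. vl I w ext (f e) = vl I w ext (g e) then 1 else 0))
       = (of_nat d :: complex) ^ c * (if \<forall>x\<in>Src. ext x = ext (h x) then 1 else 0))"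
  using assms
proof (induction I arbitrary: E f g rule: finite_induct)
  case empty
  define h where "h = g \<circ> inv_into E f"
  have bij: "bij_betw h Src Snk"
    unfolding h_def using empty
    by (metis Un_empty_left bij_betw_def bij_betw_inv_into bij_betw_trans)
  have "(\<forall>e\<in>E. ext (f e) = ext (g e)) = (\<forall>x\<in>Src. ext x = ext (h x))" for ext :: "'n \<Rightarrow> nat"
  proof
    assume A: "\<forall>e\<in>E. ext (f e) = ext (g e)"
    show "\<forall>x\<in>Src. ext x = ext (h x)"
    proof
      fix x assume "x \<in> Src"
      then have "x \<in> f ` E" using empty by auto
      then have "inv_into E f x \<in> E" "f (inv_into E f x) = x" by (auto intro: inv_into_into f_inv_into_f)
      then show "ext x = ext (h x)" using A unfolding h_def by force
    qed
  next
    assume A: "\<forall>x\<in>Src. ext x = ext (h x)"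
    show "\<forall>e\<in>E. ext (f e) = ext (g e)"
    proof
      fix e assume "e \<in> E"
      then have "f e \<in> Src" "inv_into E f (f e) = e" using empty by (auto simp: inv_into_f_f)
      then show "ext (f e) = ext (g e)" using A unfolding h_def by force
    qed
  qed
  then show ?case using bij by (intro exI[of _ 0] exI[of _ h]) (simp add: vl_def)
next
  case (insert v I0)
  let ?I = "insert v I0"
  obtain e1 where e1: "e1 \<in> E" "f e1 = v" using insert.prems(4) by (metis UnCI imageE insertI1)
  obtain e2 where e2: "e2 \<in> E" "g e2 = v" using insert.prems(5) by (metis UnCI imageE insertI1)
  have vl_upd: "vl ?I (w(v:=u)) ext n = (if n = v then u else vl I0 w ext n)" for w u ext n
    by (simp add: vl_def)
  show ?case
  proof (cases "e1 = e2")
    case True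
    let ?E = "E - {e1}"
    have fE: "f ` ?E = I0 \<union> Src"
    proof -
      have "f ` ?E = f ` E - f ` {e1}" using insert.prems(2) e1 by (intro inj_on_image_set_diff) auto
      also have "\<dots> = (insert v I0 \<union> Src) - {v}" using insert.prems(4) e1 by simp
      also have "\<dots> = I0 \<union> Src" using insert.prems(6) insert.hyps(2) by blast
      finally show ?thesis .
    qed
    have gE: "g ` ?E = I0 \<union> Snk"
    proof -
      have "g ` ?E = g ` E - g ` {e1}" using insert.prems(3) e1 by (intro inj_on_image_set_diff) auto
      also have "\<dots> = (insert v I0 \<union> Snk) - {v}" using insert.prems(5) e2 True by simp
      also have "\<dots> = I0 \<union> Snk" using insert.prems(7) insert.hyps(2) by blast
      finally show ?thesis .
    qed
    obtain c h where ch: "bij_betw h Src Snk" and IH: "\<And>ext. (\<forall>x\<in>Src \<union> Snk. ext x < d) \<Longrightarrow>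
      (\<Sum>w\<in>PiE I0 (\<lambda>_. {..<d}). (if \<forall>e\<in>?E. vl I0 w ext (f e) = vl I0 w ext (g e) then 1 else 0))
       = (of_nat d :: complex) ^ c * (if \<forall>x\<in>Src. ext x = ext (h x) then 1 else 0)"
    proof -
      have d6: "I0 \<inter> Src = {}" "I0 \<inter> Snk = {}" using insert.prems(6,7) by blast+
      have "finite ?E" "inj_on f ?E" "inj_on g ?E" using insert.prems(1,2,3) by (auto intro: inj_on_diff)
      from insert.IH[OF this fE gE d6] show ?thesis using that by blast
    qed
    show ?thesis
    proof (intro exI[of _ "Suc c"] exI[of _ h] conjI ch allI impI)
      fix ext :: "'n \<Rightarrow> nat" assume ext: "\<forall>x\<in>Src \<union> Snk. ext x < d"
      have fne: "e \<in> ?E \<Longrightarrow> f e \<noteq> v" for e using insert.prems(2) e1 by (auto simp: inj_on_def)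
      have gne: "e \<in> ?E \<Longrightarrow> g e \<noteq> v" for e using insert.prems(3) e2 True by (auto simp: inj_on_def)
      have "(\<Sum>w\<in>PiE ?I (\<lambda>_. {..<d}). (if \<forall>e\<in>E. vl ?I w ext (f e) = vl ?I w ext (g e) then 1 else 0 :: complex))
        = (\<Sum>u\<in>{..<d}. \<Sum>w\<in>PiE I0 (\<lambda>_. {..<d}). (if \<forall>e\<in>E. vl ?I (w(v:=u)) ext (f e) = vl ?I (w(v:=u)) ext (g e) then 1 else 0))"
        by (rule sum_PiE_insert[OF insert.hyps(2)])
      also have "\<dots> = (\<Sum>u\<in>{..<d}. \<Sum>w\<in>PiE I0 (\<lambda>_. {..<d}). (if \<forall>e\<in>?E. vl I0 w ext (f e) = vl I0 w ext (g e) then 1 else 0))"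
      proof (intro sum.cong refl)
        fix u w
        have "(\<forall>e\<in>E. vl ?I (w(v:=u)) ext (f e) = vl ?I (w(v:=u)) ext (g e)) = (\<forall>e\<in>?E. vl I0 w ext (f e) = vl I0 w ext (g e))"
          using fne gne e1 e2 True by (auto simp: vl_upd)
        then show "(if \<forall>e\<in>E. vl ?I (w(v:=u)) ext (f e) = vl ?I (w(v:=u)) ext (g e) then 1 else 0 :: complex)
          = (if \<forall>e\<in>?E. vl I0 w ext (f e) = vl I0 w ext (g e) then 1 else 0)" by simp
      qed
      also have "\<dots> = of_nat d * (of_nat d ^ c * (if \<forall>x\<in>Src. ext x = ext (h x) then 1 else 0))"
        using IH[OF ext] by simp
      finally show "(\<Sum>w\<in>PiE ?I (\<lambda>_. {..<d}). (if \<forall>e\<in>E. vl ?I w ext (f e) = vl ?I w ext (g e) then 1 else 0))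
         = (of_nat d :: complex) ^ Suc c * (if \<forall>x\<in>Src. ext x = ext (h x) then 1 else 0)" by simp
    qed
  next
    case False
    let ?E = "E - {e1}"
    let ?g = "g(e2 := g e1)"
    have g1v: "g e1 \<noteq> v" using insert.prems(3) e1 e2 False by (auto simp: inj_on_def)
    have f2v: "f e2 \<noteq> v" using insert.prems(2) e1 e2 False by (auto simp: inj_on_def)
    have fE: "f ` ?E = I0 \<union> Src"
    proof -
      have "f ` ?E = f ` E - f ` {e1}" using insert.prems(2) e1 by (intro inj_on_image_set_diff) auto
      also have "\<dots> = (insert v I0 \<union> Src) - {v}" using insert.prems(4) e1 by simp
      also have "\<dots> = I0 \<union> Src" using insert.prems(6) insert.hyps(2) by blast
      finally show ?thesis .
    qed
    have gE0: "g ` (E - {e2}) = I0 \<union> Snk"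
    proof -
      have "g ` (E - {e2}) = g ` E - g ` {e2}" using insert.prems(3) e2 by (intro inj_on_image_set_diff) auto
      also have "\<dots> = (insert v I0 \<union> Snk) - {v}" using insert.prems(5) e2 by simp
      also have "\<dots> = I0 \<union> Snk" using insert.prems(7) insert.hyps(2) by blast
      finally show ?thesis .
    qed
    have gE: "?g ` ?E = I0 \<union> Snk"
    proof -
      have "?g ` ?E = insert (g e1) (g ` (?E - {e2}))" using e2 False by auto
      also have "\<dots> = g ` (E - {e2})" using e1 False by auto
      finally show ?thesis using gE0 by simp
    qed
    have ginj: "inj_on ?g ?E"
      using insert.prems(3) e1 e2 False unfolding inj_on_def by (metis DiffE fun_upd_apply singletonI)
    obtain c h where ch: "bij_betw h Src Snk" and IH: "\<And>ext. (\<forall>x\<in>Src \<union> Snk. ext x < d) \<Longrightarrow>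
      (\<Sum>w\<in>PiE I0 (\<lambda>_. {..<d}). (if \<forall>e\<in>?E. vl I0 w ext (f e) = vl I0 w ext (?g e) then 1 else 0))
       = (of_nat d :: complex) ^ c * (if \<forall>x\<in>Src. ext x = ext (h x) then 1 else 0)"
    proof -
      have d6: "I0 \<inter> Src = {}" "I0 \<inter> Snk = {}" using insert.prems(6,7) by blast+
      have "finite ?E" "inj_on f ?E" using insert.prems(1,2) by (auto intro: inj_on_diff)
      from insert.IH[OF this ginj fE gE d6] show ?thesis using that by blast
    qed
    show ?thesis
    proof (intro exI[of _ c] exI[of _ h] conjI ch allI impI)
      fix ext :: "'n \<Rightarrow> nat" assume ext: "\<forall>x\<in>Src \<union> Snk. ext x < d"
      have fne: "e \<in> ?E \<Longrightarrow> f e \<noteq> v" for e using insert.prems(2) e1 by (auto simp: inj_on_def)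
      have gne: "e \<in> E - {e1, e2} \<Longrightarrow> g e \<noteq> v" for e using insert.prems(3) e2 by (auto simp: inj_on_def)
      have "(\<Sum>w\<in>PiE ?I (\<lambda>_. {..<d}). (if \<forall>e\<in>E. vl ?I w ext (f e) = vl ?I w ext (g e) then 1 else 0 :: complex))
        = (\<Sum>u\<in>{..<d}. \<Sum>w\<in>PiE I0 (\<lambda>_. {..<d}). (if \<forall>e\<in>E. vl ?I (w(v:=u)) ext (f e) = vl ?I (w(v:=u)) ext (g e) then 1 else 0))"
        by (rule sum_PiE_insert[OF insert.hyps(2)])
      also have "\<dots> = (\<Sum>w\<in>PiE I0 (\<lambda>_. {..<d}). \<Sum>u\<in>{..<d}. (if \<forall>e\<in>E. vl ?I (w(v:=u)) ext (f e) = vl ?I (w(v:=u)) ext (g e) then 1 else 0))"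
        by (rule sum.swap)
      also have "\<dots> = (\<Sum>w\<in>PiE I0 (\<lambda>_. {..<d}). (if \<forall>e\<in>?E. vl I0 w ext (f e) = vl I0 w ext (?g e) then 1 else 0))"
      proof (intro sum.cong refl)
        fix w assume w: "w \<in> PiE I0 (\<lambda>_. {..<d})"
        let ?A = "vl I0 w ext (g e1)"
        have Ad: "?A < d"
        proof -
          have "g e1 \<in> I0 \<union> Snk" using e1 g1v insert.prems(5) by auto
          then show ?thesis using w ext by (auto simp: vl_def PiE_def)
        qed
        have cond: "(\<forall>e\<in>E. vl ?I (w(v:=u)) ext (f e) = vl ?I (w(v:=u)) ext (g e)) =
           (u = ?A \<and> (\<forall>e\<in>?E. vl I0 w ext (f e) = vl I0 w ext (?g e)))" for u
        proof -
          have "(\<forall>e\<in>E. vl ?I (w(v:=u)) ext (f e) = vl ?I (w(v:=u)) ext (g e)) =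
            (u = ?A \<and> vl I0 w ext (f e2) = u \<and> (\<forall>e\<in>E - {e1,e2}. vl I0 w ext (f e) = vl I0 w ext (g e)))"
            using e1 e2 g1v f2v fne gne False by (auto simp: vl_upd)
          also have "\<dots> = (u = ?A \<and> (\<forall>e\<in>?E. vl I0 w ext (f e) = vl I0 w ext (?g e)))"
            using e2 False by (auto)
          finally show ?thesis .
        qed
        show "(\<Sum>u\<in>{..<d}. (if \<forall>e\<in>E. vl ?I (w(v:=u)) ext (f e) = vl ?I (w(v:=u)) ext (g e) then 1 else 0 :: complex))
          = (if \<forall>e\<in>?E. vl I0 w ext (f e) = vl I0 w ext (?g e) then 1 else 0)"
          unfolding cond by (rule sum_ind[OF Ad])
      qed
      also have "\<dots> = of_nat d ^ c * (if \<forall>x\<in>Src. ext x = ext (h x) then 1 else 0)"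
        using IH[OF ext] by simp
      finally show "(\<Sum>w\<in>PiE ?I (\<lambda>_. {..<d}). (if \<forall>e\<in>E. vl ?I w ext (f e) = vl ?I w ext (g e) then 1 else 0))
         = (of_nat d :: complex) ^ c * (if \<forall>x\<in>Src. ext x = ext (h x) then 1 else 0)" .
    qed
  qed
qed

definition pc :: "nat \<Rightarrow> mi \<Rightarrow> bool" where
  "pc p x \<longleftrightarrow> (\<forall>s\<in>{2..2*p-1}. x s = x (2*p+1-s))"

definition Pf :: "nat set \<Rightarrow> nat \<Rightarrow> nat \<Rightarrow> op" where
  "Pf S p n = (\<lambda>i j. if (\<forall>t\<in>{1..n}. i (p+1-t) = i (p+t) \<and> j (p+1-t) = j (p+t)) \<and>
       (\<forall>s\<in>S - {p+1-n..p+n}. i s = j s) then 1 else 0)"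

lemma idx_eq: "x \<in> idx S d \<Longrightarrow> y \<in> idx S d \<Longrightarrow> (x = y) = (\<forall>s\<in>S. x s = y s)"
  unfolding idx_def by (metis PiE_ext)

lemma finite_idx: "finite S \<Longrightarrow> finite (idx S d)"
  unfolding idx_def by (simp add: finite_PiE)

lemma idx_undef: "x \<in> idx S d \<Longrightarrow> s \<notin> S \<Longrightarrow> x s = undefined"
  unfolding idx_def by (auto simp: PiE_def extensional_def)

lemma idx_lt: "x \<in> idx S d \<Longrightarrow> s \<in> S \<Longrightarrow> x s < d"
  unfolding idx_def by (auto simp: PiE_def)

lemma vstep:
  assumes fS: "finite S" and S: "{p-n..p+n+1} \<subseteq> S" and n: "n+2 \<le> p"
    and i: "i \<in> idx S d" and j: "j \<in> idx S d"
    and A: "\<And>i k. i \<in> idx S d \<Longrightarrow> k \<in> idx S d \<Longrightarrow> A i k = Pf S p n i k"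
  shows "opmult S d A (Wop S (p+1-Suc n) (p+Suc n)) i j = Pf S p (Suc n) i j"
proof -
  define a where "a = p - n"
  define b where "b = p + n + 1"
  have ab: "p+1-Suc n = a" "p + Suc n = b" unfolding a_def b_def using n by auto
  define k0 where "k0 = (\<lambda>s. if s = a \<or> s = b then i s else j s)"
  have aS: "a \<in> S" "b \<in> S" using S n unfolding a_def b_def by auto
  have k0: "k0 \<in> idx S d"
  proof -
    have "\<forall>s\<in>S. k0 s \<in> {..<d}" using idx_lt[OF i] idx_lt[OF j] unfolding k0_def by simp
    moreover have "\<forall>s. s \<notin> S \<longrightarrow> k0 s = undefined" using idx_undef[OF j] aS unfolding k0_def by auto
    ultimately show ?thesis unfolding idx_def PiE_iff extensional_def by blast
  qed
  let ?C1 = "\<lambda>i k. (\<forall>t\<in>{1..n}. i (p+1-t) = i (p+t) \<and> k (p+1-t) = k (p+t)) \<and> (\<forall>s\<in>S - {p+1-n..p+n}. i s = k s)"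
  let ?C2 = "\<lambda>i k. (\<forall>t\<in>{1..Suc n}. i (p+1-t) = i (p+t) \<and> k (p+1-t) = k (p+t)) \<and> (\<forall>s\<in>S - {p+1-Suc n..p+Suc n}. i s = k s)"
  let ?W = "\<lambda>k j. k a = k b \<and> j a = j b \<and> (\<forall>s\<in>S-{a,b}. k s = j s)"
  have Mn_ab: "a \<notin> {p+1-n..p+n}" "b \<notin> {p+1-n..p+n}" "a \<noteq> b" unfolding a_def b_def using n by auto
  have Mn1: "\<And>s. s \<in> {p+1-Suc n..p+Suc n} \<longleftrightarrow> s \<in> {p+1-n..p+n} \<or> s = a \<or> s = b"
    unfolding a_def b_def using n by auto
  have tn: "\<And>t. t \<in> {1..n} \<Longrightarrow> p+1-t \<in> {p+1-n..p+n} \<and> p+t \<in> {p+1-n..p+n}" by auto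
  have MnS: "\<And>s. s \<in> {p+1-n..p+n} \<Longrightarrow> s \<in> S" using S by auto
  have key: "(?C1 i k \<and> ?W k j) = (k = k0 \<and> ?C2 i j)" if k: "k \<in> idx S d" for k
  proof
    assume H: "?C1 i k \<and> ?W k j"
    then have H1: "\<And>t. t \<in> {1..n} \<Longrightarrow> i (p+1-t) = i (p+t) \<and> k (p+1-t) = k (p+t)"
      and H2: "\<And>s. s \<in> S \<Longrightarrow> s \<notin> {p+1-n..p+n} \<Longrightarrow> i s = k s"
      and H3: "k a = k b" and H4: "j a = j b" and H5: "\<And>s. s \<in> S \<Longrightarrow> s \<noteq> a \<Longrightarrow> s \<noteq> b \<Longrightarrow> k s = j s"
      by blast+
    have ia: "i a = k a" "i b = k b" using H2 aS Mn_ab by auto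
    have "k = k0" unfolding idx_eq[OF k k0]
    proof
      fix s assume s: "s \<in> S"
      show "k s = k0 s"
      proof (cases "s = a \<or> s = b")
        case True
        then show ?thesis using ia unfolding k0_def by auto
      next
        case False
        then show ?thesis using H5 s unfolding k0_def by auto
      qed
    qed
    moreover have "?C2 i j"
    proof (rule conjI; intro ballI)
      fix t assume t: "t \<in> {1..Suc n}"
      show "i (p+1-t) = i (p+t) \<and> j (p+1-t) = j (p+t)"
      proof (cases "t = Suc n")
        case True
        then have "p+1-t = a" "p+t = b" using ab by auto
        then show ?thesis using ia H3 H4 by simp
      next
        case False
        then have t': "t \<in> {1..n}" using t by auto
        have m: "p+1-t \<in> {p+1-n..p+n}" "p+t \<in> {p+1-n..p+n}" using tn[OF t'] by auto
        then have "p+1-t \<noteq> a" "p+1-t \<noteq> b" "p+t \<noteq> a" "p+t \<noteq> b" using Mn_ab by auto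
        then have "j (p+1-t) = k (p+1-t)" "j (p+t) = k (p+t)" using H5 MnS m by auto
        then show ?thesis using H1[OF t'] by simp
      qed
    next
      fix s assume s: "s \<in> S - {p+1-Suc n..p+Suc n}"
      then have "s \<in> S" "s \<notin> {p+1-n..p+n}" "s \<noteq> a" "s \<noteq> b" using Mn1 by auto
      then show "i s = j s" using H2 H5 by metis
    qed
    ultimately show "k = k0 \<and> ?C2 i j" by blast
  next
    assume H: "k = k0 \<and> ?C2 i j"
    then have kk: "k = k0" and G1: "\<And>t. t \<in> {1..Suc n} \<Longrightarrow> i (p+1-t) = i (p+t) \<and> j (p+1-t) = j (p+t)"
      and G2: "\<And>s. s \<in> S \<Longrightarrow> s \<notin> {p+1-Suc n..p+Suc n} \<Longrightarrow> i s = j s" by blast+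
    have ab_eq: "i a = i b" "j a = j b" using G1[of "Suc n"] ab by auto
    have "?C1 i k"
    proof (rule conjI; intro ballI)
      fix t assume t': "t \<in> {1..n}"
      have m: "p+1-t \<in> {p+1-n..p+n}" "p+t \<in> {p+1-n..p+n}" using tn[OF t'] by auto
      then have "p+1-t \<noteq> a" "p+1-t \<noteq> b" "p+t \<noteq> a" "p+t \<noteq> b" using Mn_ab by auto
      moreover have "t \<in> {1..Suc n}" using t' by auto
      ultimately show "i (p+1-t) = i (p+t) \<and> k (p+1-t) = k (p+t)" using G1 unfolding kk k0_def by simp
    next
      fix s assume s: "s \<in> S - {p+1-n..p+n}"
      show "i s = k s"
      proof (cases "s = a \<or> s = b")
        case True then show ?thesis unfolding kk k0_def by auto
      next
        case False
        then have "s \<notin> {p+1-Suc n..p+Suc n}" using s Mn1 by auto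
        then show ?thesis using G2 s False unfolding kk k0_def by auto
      qed
    qed
    moreover have "?W k j"
      using ab_eq Mn_ab(3) unfolding kk k0_def by auto
    ultimately show "?C1 i k \<and> ?W k j" by blast
  qed
  have "opmult S d A (Wop S (p+1-Suc n) (p+Suc n)) i j = (\<Sum>k\<in>idx S d. if k = k0 then Pf S p (Suc n) i j else 0)"
    unfolding opmult_def
  proof (rule sum.cong[OF refl])
    fix k assume k: "k \<in> idx S d"
    have "A i k * Wop S (p+1-Suc n) (p+Suc n) k j = (if ?C1 i k \<and> ?W k j then 1 else 0)"
      unfolding A[OF i k] Pf_def Wop_def ab by simp
    also have "\<dots> = (if k = k0 then Pf S p (Suc n) i j else 0)"
      unfolding key[OF k] Pf_def by auto
    finally show "A i k * Wop S (p+1-Suc n) (p+Suc n) k j = (if k = k0 then Pf S p (Suc n) i j else 0)" .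
  qed
  also have "\<dots> = Pf S p (Suc n) i j" using k0 finite_idx[OF fS] by (simp add: sum.delta')
  finally show ?thesis .
qed

lemma vfold:
  assumes fS: "finite S" and S: "{2..2*p-1} \<subseteq> S"
  shows "n + 1 \<le> p \<Longrightarrow> i \<in> idx S d \<Longrightarrow> j \<in> idx S d \<Longrightarrow>
    fold (\<lambda>k A. opmult S d A (Wop S (p+1-k) (p+k))) [1..<Suc n] (ident S) i j = Pf S p n i j"
proof (induction n arbitrary: i j)
  case 0
  then show ?case by (simp add: ident_def Pf_def)
next
  case (Suc n)
  have "fold (\<lambda>k A. opmult S d A (Wop S (p+1-k) (p+k))) [1..<Suc (Suc n)] (ident S) i j =
     opmult S d (fold (\<lambda>k A. opmult S d A (Wop S (p+1-k) (p+k))) [1..<Suc n] (ident S)) (Wop S (p+1-Suc n) (p+Suc n)) i j"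
    by simp
  also have "\<dots> = Pf S p (Suc n) i j"
  proof (rule vstep[OF fS])
    have np: "n + 2 \<le> p" using Suc.prems(1) by simp
    then have "{p - n..p + n + 1} \<subseteq> {2..2*p-1}" by (intro subsetI) (simp; arith)
    then show "{p - n..p + n + 1} \<subseteq> S" using S by blast
    show "n + 2 \<le> p" by (rule np)
    show "i \<in> idx S d" "j \<in> idx S d" by (rule Suc.prems(2), rule Suc.prems(3))
    fix i' k assume "i' \<in> idx S d" "k \<in> idx S d"
    then show "fold (\<lambda>k A. opmult S d A (Wop S (p+1-k) (p+k))) [1..<Suc n] (ident S) i' k = Pf S p n i' k"
      using Suc.IH np by simp
  qed
  finally show ?case .
qed

lemma pc_iff: "(\<forall>t\<in>{1..p-1}. x (p+1-t) = x (p+t)) = pc p x"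
  unfolding pc_def
proof
  assume H: "\<forall>t\<in>{1..p-1}. x (p+1-t) = x (p+t)"
  show "\<forall>s\<in>{2..2*p-1}. x s = x (2*p+1-s)"
  proof
    fix s assume s: "s \<in> {2..2*p-1}"
    show "x s = x (2*p+1-s)"
    proof (cases "s \<le> p")
      case True
      then have "p+1-s \<in> {1..p-1}" "p+1-(p+1-s) = s" "p+(p+1-s) = 2*p+1-s" using s by auto
      then show ?thesis using H by metis
    next
      case False
      then have "s-p \<in> {1..p-1}" "p+1-(s-p) = 2*p+1-s" "p+(s-p) = s" using s by auto
      then show ?thesis using H by metis
    qed
  qed
next
  assume H: "\<forall>s\<in>{2..2*p-1}. x s = x (2*p+1-s)"
  show "\<forall>t\<in>{1..p-1}. x (p+1-t) = x (p+t)"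
  proof
    fix t assume t: "t \<in> {1..p-1}"
    then have "p+1-t \<in> {2..2*p-1}" "2*p+1-(p+1-t) = p+t" by auto
    then show "x (p+1-t) = x (p+t)" using H by metis
  qed
qed

lemma Vform:
  assumes fS: "finite S" and S: "{2..2*p-1} \<subseteq> S" and p: "p \<ge> 1" and i: "i \<in> idx S d" and j: "j \<in> idx S d"
  shows "Vprod S d p i j = (if pc p i \<and> pc p j \<and> (\<forall>s\<in>S-{2..2*p-1}. i s = j s) then 1 else 0)"
proof -
  have "[1..<p] = [1..<Suc (p-1)]" using p by simp
  have "fold (\<lambda>k A. opmult S d A (Wop S (p+1-k) (p+k))) [1..<Suc (p-1)] (ident S) i j = Pf S p (p-1) i j"
    by (rule vfold[OF fS S]) (use i j p in auto)
  then have "Vprod S d p i j = Pf S p (p-1) i j"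
    unfolding Vprod_def using p by simp
  also have "\<dots> = (if pc p i \<and> pc p j \<and> (\<forall>s\<in>S-{2..2*p-1}. i s = j s) then 1 else 0)"
  proof -
    have e: "{p+1-(p-1)..p+(p-1)} = {2..2*p-1}" using p by auto
    show ?thesis unfolding Pf_def e pc_iff[symmetric] by auto
  qed
  finally show ?thesis .
qed

definition Gs :: "nat \<Rightarrow> nat \<Rightarrow> mi \<Rightarrow> mi set" where
  "Gs p d a = {l \<in> idx {1..2*p} d. pc p l \<and> (\<forall>s\<in>{1,2*p}. l s = a s)}"

lemma SM: "(p::nat) \<ge> 1 \<Longrightarrow> (s::nat) \<in> {1..2*p} \<Longrightarrow> s \<notin> {2..2*p-1} \<Longrightarrow> s = 1 \<or> s = 2*p"
  by auto

lemma M_refl: "(s::nat) \<in> {2..2*p-1} \<Longrightarrow> 2*p+1-s \<in> {2..2*p-1}" by auto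

lemma Vfull:
  assumes p: "p \<ge> 1" and i: "i \<in> idx {1..2*p} d" and l: "l \<in> idx {1..2*p} d"
  shows "Vprod {1..2*p} d p i l = (if pc p i \<and> l \<in> Gs p d i then 1 else 0)"
    and "Vprod {1..2*p} d p i l = (if pc p l \<and> i \<in> Gs p d l then 1 else 0)"
proof -
  have SE: "{1..2*p}-{2..2*p-1} = {1,2*p}" using p by auto
  have e: "(\<forall>s\<in>{1..2*p}-{2..2*p-1}. i s = l s) = (\<forall>s\<in>{1,2*p}. i s = l s)"
    unfolding SE ..
  have V: "Vprod {1..2*p} d p i l = (if pc p i \<and> pc p l \<and> (\<forall>s\<in>{1,2*p}. i s = l s) then 1 else 0)"
    using Vform[of "{1..2*p}" p i d l] p i l unfolding e by auto
  show "Vprod {1..2*p} d p i l = (if pc p i \<and> l \<in> Gs p d i then 1 else 0)"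
    unfolding V Gs_def using l by auto
  show "Vprod {1..2*p} d p i l = (if pc p l \<and> i \<in> Gs p d l then 1 else 0)"
    unfolding V Gs_def using i by auto
qed

lemma Gs_sub: "Gs p d a \<subseteq> idx {1..2*p} d" unfolding Gs_def by auto

lemma finite_Gs: "finite (Gs p d a)"
  using finite_subset[OF Gs_sub finite_idx] by auto

lemma sum_Gs: "(\<Sum>l\<in>Gs p d a. F l) = (\<Sum>l\<in>idx {1..2*p} d. if l \<in> Gs p d a then F l else 0)"
proof -
  have "Gs p d a = idx {1..2*p} d \<inter> Gs p d a" using Gs_sub by blast
  then show ?thesis using sum.inter_restrict[OF finite_idx[of "{1..2*p}" d], of F "Gs p d a"] by simp
qed

lemma reindexK:
  assumes p: "p \<ge> 1" and a: "a \<in> idx {1, 2*p} d"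
  shows "(\<Sum>m\<in>idx {2..2*p-1} d. if pc p m then F (\<lambda>k. if k \<in> {2..2*p-1} then m k else a k) else 0)
       = (\<Sum>l\<in>Gs p d a. F l)"
proof -
  let ?M = "{2..2*p-1}"
  let ?S = "{1..2*p}"
  let ?A = "{m \<in> idx ?M d. pc p m}"
  define \<phi> where "\<phi> = (\<lambda>m. (\<lambda>k. if k \<in> ?M then m k else a k))"
  have "(\<Sum>m\<in>idx ?M d. if pc p m then F (\<phi> m) else 0) = (\<Sum>m\<in>?A. F (\<phi> m))"
    by (rule sum.inter_filter[symmetric]) (rule finite_idx, simp)
  also have "\<dots> = (\<Sum>l\<in>Gs p d a. F l)"
  proof (rule sum.reindex_bij_betw)
    show "bij_betw \<phi> ?A (Gs p d a)"
    proof (rule bij_betw_byWitness[where f' = "\<lambda>l. restrict l ?M"])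
      show "\<forall>m\<in>?A. restrict (\<phi> m) ?M = m"
      proof
        fix m assume m: "m \<in> ?A"
        show "restrict (\<phi> m) ?M = m"
        proof
          fix k show "restrict (\<phi> m) ?M k = m k"
            using m idx_undef[of m ?M d k] unfolding \<phi>_def by auto
        qed
      qed
      show "\<forall>l\<in>Gs p d a. \<phi> (restrict l ?M) = l"
      proof
        fix l assume l: "l \<in> Gs p d a"
        then have li: "l \<in> idx ?S d" and lE: "\<forall>s\<in>{1,2*p}. l s = a s" unfolding Gs_def by auto
        show "\<phi> (restrict l ?M) = l"
        proof
          fix k show "\<phi> (restrict l ?M) k = l k"
          proof (cases "k \<in> ?M")
            case True then show ?thesis unfolding \<phi>_def by simp
          next
            case False
            show ?thesis
            proof (cases "k \<in> ?S")
              case True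
              then have "k = 1 \<or> k = 2*p" using SM[OF p] False by blast
              then show ?thesis using lE False unfolding \<phi>_def by auto
            next
              case F2: False
              then have "k \<notin> {1, 2*p}" using p by auto
              then show ?thesis using idx_undef[OF li F2] idx_undef[OF a] False unfolding \<phi>_def by auto
            qed
          qed
        qed
      qed
      show "\<phi> ` ?A \<subseteq> Gs p d a"
      proof
        fix l assume "l \<in> \<phi> ` ?A"
        then obtain m where m: "m \<in> idx ?M d" "pc p m" and lm: "l = \<phi> m" by auto
        have "l \<in> idx ?S d"
        proof -
          have "\<forall>k\<in>?S. l k \<in> {..<d}"
          proof
            fix k assume k: "k \<in> ?S"
            show "l k \<in> {..<d}"
            proof (cases "k \<in> ?M")
              case True then show ?thesis using idx_lt[OF m(1) True] lm unfolding \<phi>_def by simp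
            next
              case False
              then have "k \<in> {1, 2*p}" using SM[OF p k] by auto
              then have "l k = a k" unfolding lm \<phi>_def using False by auto
              then show ?thesis using idx_lt[OF a \<open>k \<in> {1, 2*p}\<close>] by simp
            qed
          qed
          moreover have "\<forall>k. k \<notin> ?S \<longrightarrow> l k = undefined"
          proof (intro allI impI)
            fix k assume k: "k \<notin> ?S"
            then have "k \<notin> ?M" "k \<notin> {1, 2*p}" using p by auto
            then show "l k = undefined" using idx_undef[OF a] unfolding lm \<phi>_def by auto
          qed
          ultimately show ?thesis unfolding idx_def PiE_iff extensional_def by blast
        qed
        moreover have "pc p l" unfolding pc_def
        proof
          fix s assume s: "s \<in> ?M"
          have s2: "2*p+1-s \<in> ?M" by (rule M_refl[OF s])
          have "m s = m (2*p+1-s)" using m(2) s unfolding pc_def by blast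
          then show "l s = l (2*p+1-s)" unfolding lm \<phi>_def using s s2 by simp
        qed
        moreover have "\<forall>s\<in>{1,2*p}. l s = a s"
        proof
          fix s assume s: "s \<in> {1, 2*p}"
          then have "s \<notin> ?M" using p by auto
          then show "l s = a s" unfolding lm \<phi>_def by auto
        qed
        ultimately show "l \<in> Gs p d a" unfolding Gs_def by blast
      qed
      show "(\<lambda>l. restrict l ?M) ` Gs p d a \<subseteq> ?A"
      proof
        fix m assume "m \<in> (\<lambda>l. restrict l ?M) ` Gs p d a"
        then obtain l where l: "l \<in> Gs p d a" and ml: "m = restrict l ?M" by auto
        then have li: "l \<in> idx ?S d" "pc p l" unfolding Gs_def by auto
        have "m \<in> idx ?M d"
          unfolding ml idx_def using li(1) idx_lt[OF li(1)] by (auto simp: PiE_iff)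
        moreover have "pc p m" unfolding pc_def
        proof
          fix s assume s: "s \<in> ?M"
          have s2: "2*p+1-s \<in> ?M" by (rule M_refl[OF s])
          have "l s = l (2*p+1-s)" using li(2) s unfolding pc_def by blast
          then show "m s = m (2*p+1-s)" unfolding ml using s s2 by simp
        qed
        ultimately show "m \<in> ?A" by blast
      qed
    qed
  qed
  finally show ?thesis unfolding \<phi>_def .
qed

lemma phi_idx:
  assumes p: "p \<ge> 1" and a: "a \<in> idx {1, 2*p} d" and m: "m \<in> idx {2..2*p-1} d"
  shows "(\<lambda>k. if k \<in> {2..2*p-1} then m k else a k) \<in> idx {1..2*p} d"
proof -
  let ?l = "(\<lambda>k. if k \<in> {2..2*p-1} then m k else a k)"
  have "\<forall>k\<in>{1..2*p}. ?l k \<in> {..<d}"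
  proof
    fix k assume k: "k \<in> {1..2*p}"
    show "?l k \<in> {..<d}"
    proof (cases "k \<in> {2..2*p-1}")
      case True then show ?thesis using idx_lt[OF m True] by simp
    next
      case False
      then have "k \<in> {1, 2*p}" using SM[OF p k] by auto
      moreover have "?l k = a k" using False by auto
      ultimately show ?thesis using idx_lt[OF a] by simp
    qed
  qed
  moreover have "\<forall>k. k \<notin> {1..2*p} \<longrightarrow> ?l k = undefined"
  proof (intro allI impI)
    fix k assume k: "k \<notin> {1..2*p}"
    then have "k \<notin> {2..2*p-1}" "k \<notin> {1, 2*p}" using p by auto
    then show "?l k = undefined" using idx_undef[OF a] by auto
  qed
  ultimately show ?thesis unfolding idx_def PiE_iff extensional_def by blast
qed

lemma phi_pc: "pc p (\<lambda>k. if k \<in> {2..2*p-1} then m k else a k) = pc p m"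
proof -
  have "\<forall>s\<in>{2..2*p-1}. (if 2*p+1-s \<in> {2..2*p-1} then m (2*p+1-s) else a (2*p+1-s)) = m (2*p+1-s)"
    using M_refl by auto
  then show ?thesis unfolding pc_def by auto
qed

lemma phi_Gs: "p \<ge> 1 \<Longrightarrow> Gs p d (\<lambda>k. if k \<in> {2..2*p-1} then m k else a k) = Gs p d a"
  unfolding Gs_def by auto

lemma XtF:
  assumes p: "p \<ge> 1" and a: "a \<in> idx {1, 2*p} d" and b: "b \<in> idx {1, 2*p} d"
  shows "ptrace {2..2*p-1} d (opmult {1..2*p} d X (Vprod {1..2*p} d p)) a b
     = (\<Sum>l\<in>Gs p d a. \<Sum>l'\<in>Gs p d b. X l l')"
proof -
  let ?M = "{2..2*p-1}"
  let ?S = "{1..2*p}"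
  let ?H = "\<lambda>u. \<Sum>l'\<in>Gs p d b. X u l'"
  have step: "opmult ?S d X (Vprod ?S d p) (\<lambda>k. if k \<in> ?M then m k else a k) (\<lambda>k. if k \<in> ?M then m k else b k)
      = (if pc p m then ?H (\<lambda>k. if k \<in> ?M then m k else a k) else 0)" if m: "m \<in> idx ?M d" for m
  proof -
    let ?v = "(\<lambda>k. if k \<in> ?M then m k else b k)"
    let ?u = "(\<lambda>k. if k \<in> ?M then m k else a k)"
    have v: "?v \<in> idx ?S d" by (rule phi_idx[OF p b m])
    have "opmult ?S d X (Vprod ?S d p) ?u ?v = (\<Sum>l\<in>idx ?S d. X ?u l * (if pc p m \<and> l \<in> Gs p d b then 1 else 0))"
      unfolding opmult_def
    proof (rule sum.cong[OF refl])
      fix l assume l: "l \<in> idx ?S d"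
      show "X ?u l * Vprod ?S d p l ?v = X ?u l * (if pc p m \<and> l \<in> Gs p d b then 1 else 0)"
        unfolding Vfull(2)[OF p l v] phi_pc phi_Gs[OF p] ..
    qed
    also have "\<dots> = (if pc p m then (\<Sum>l\<in>idx ?S d. if l \<in> Gs p d b then X ?u l else 0) else 0)"
      by (auto intro!: sum.cong)
    also have "\<dots> = (if pc p m then ?H ?u else 0)" unfolding sum_Gs ..
    finally show ?thesis .
  qed
  have "ptrace ?M d (opmult ?S d X (Vprod ?S d p)) a b
      = (\<Sum>m\<in>idx ?M d. if pc p m then ?H (\<lambda>k. if k \<in> ?M then m k else a k) else 0)"
    unfolding ptrace_def by (rule sum.cong[OF refl]) (rule step)
  also have "\<dots> = (\<Sum>l\<in>Gs p d a. ?H l)" by (rule reindexK[OF p a])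
  finally show ?thesis .
qed

lemma partB_lhs:
  assumes p: "p \<ge> 1" and i: "i \<in> idx {1..2*p} d" and j: "j \<in> idx {1..2*p} d"
  shows "opmult {1..2*p} d (opmult {1..2*p} d (Vprod {1..2*p} d p) X) (Vprod {1..2*p} d p) i j
    = (if pc p i \<and> pc p j then 1 else 0) * (\<Sum>l\<in>Gs p d i. \<Sum>l'\<in>Gs p d j. X l l')"
proof -
  let ?S = "{1..2*p}"
  let ?V = "Vprod ?S d p"
  have "opmult ?S d (opmult ?S d ?V X) ?V i j =
     (\<Sum>k\<in>idx ?S d. \<Sum>l\<in>idx ?S d. (if pc p i \<and> pc p j then (if l \<in> Gs p d i then (if k \<in> Gs p d j then X l k else 0) else 0) else 0))"
    unfolding opmult_def sum_distrib_right
  proof (intro sum.cong refl)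
    fix k l assume k: "k \<in> idx ?S d" and l: "l \<in> idx ?S d"
    show "?V i l * X l k * ?V k j = (if pc p i \<and> pc p j then (if l \<in> Gs p d i then (if k \<in> Gs p d j then X l k else 0) else 0) else 0)"
      unfolding Vfull(1)[OF p i l] Vfull(2)[OF p k j] by auto
  qed
  also have "\<dots> = (\<Sum>l\<in>idx ?S d. \<Sum>k\<in>idx ?S d. (if pc p i \<and> pc p j then (if l \<in> Gs p d i then (if k \<in> Gs p d j then X l k else 0) else 0) else 0))"
    by (rule sum.swap)
  also have "\<dots> = (if pc p i \<and> pc p j then 1 else 0) * (\<Sum>l\<in>Gs p d i. \<Sum>l'\<in>Gs p d j. X l l')"
  proof (cases "pc p i \<and> pc p j")
    case True
    have "(\<Sum>l\<in>idx ?S d. \<Sum>k\<in>idx ?S d. (if l \<in> Gs p d i then (if k \<in> Gs p d j then X l k else 0) else 0))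
       = (\<Sum>l\<in>idx ?S d. if l \<in> Gs p d i then (\<Sum>k\<in>idx ?S d. if k \<in> Gs p d j then X l k else 0) else 0)"
      by (rule sum.cong) auto
    then show ?thesis using True unfolding sum_Gs by simp
  next
    case False then show ?thesis by (simp only: if_not_P[OF False] if_False sum.neutral_const mult_zero_left)
  qed
  finally show ?thesis .
qed

lemma restrict_idx: "i \<in> idx S d \<Longrightarrow> T \<subseteq> S \<Longrightarrow> restrict i T \<in> idx T d"
  unfolding idx_def by (auto simp: PiE_iff)

lemma pc_restrict: "{2..2*p-1} \<subseteq> T \<Longrightarrow> pc p (restrict i T) = pc p i"
  unfolding pc_def using M_refl by (auto simp: subset_iff)

lemma Gs_restrict: "Gs p d (restrict i {1, 2*p}) = Gs p d i"
  unfolding Gs_def by auto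

lemma partB:
  fixes X :: op
  assumes p: "p \<ge> 1" and i: "i \<in> idx {1..2*p} d" and j: "j \<in> idx {1..2*p} d"
  defines "Xt \<equiv> ptrace {2..2*p-1} d (opmult {1..2*p} d X (Vprod {1..2*p} d p))"
  shows "opmult {1..2*p} d (opmult {1..2*p} d (Vprod {1..2*p} d p) X) (Vprod {1..2*p} d p) i j
       = optensor {1, 2*p} {2..2*p-1} Xt (Vprod {2..2*p-1} d p) i j"
proof -
  let ?M = "{2..2*p-1}"
  have sub: "{1, 2*p} \<subseteq> {1..2*p}" "?M \<subseteq> {1..2*p}" using p by auto
  have ri: "restrict i {1, 2*p} \<in> idx {1, 2*p} d" "restrict j {1, 2*p} \<in> idx {1, 2*p} d"
    using restrict_idx[OF i sub(1)] restrict_idx[OF j sub(1)] .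
  have rM: "restrict i ?M \<in> idx ?M d" "restrict j ?M \<in> idx ?M d"
    using restrict_idx[OF i sub(2)] restrict_idx[OF j sub(2)] .
  have VM: "Vprod ?M d p (restrict i ?M) (restrict j ?M) = (if pc p i \<and> pc p j then 1 else 0)"
    using Vform[OF _ _ p rM(1) rM(2)] pc_restrict[of p ?M] by simp
  show ?thesis
    unfolding optensor_def Xt_def XtF[OF p ri] Gs_restrict partB_lhs[OF p i j] VM by simp
qed

lemma fold_ptrans:
  "distinct ks \<Longrightarrow> fold ptrans1 ks F i j = F (\<lambda>k. if k \<in> set ks then j k else i k) (\<lambda>k. if k \<in> set ks then i k else j k)"
proof (induction ks arbitrary: F)
  case Nil then show ?case by simp
next
  case (Cons x xs)
  have "fold ptrans1 (x#xs) F i j = ptrans1 x F (\<lambda>k. if k \<in> set xs then j k else i k) (\<lambda>k. if k \<in> set xs then i k else j k)"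
    using Cons by simp
  also have "\<dots> = F (\<lambda>k. if k \<in> set (x#xs) then j k else i k) (\<lambda>k. if k \<in> set (x#xs) then i k else j k)"
    unfolding ptrans1_def using Cons.prems by (intro arg_cong2[where f=F]) (auto simp: fun_eq_iff)
  finally show ?case .
qed

definition rep :: "nat \<Rightarrow> nat \<Rightarrow> nat" where
  "rep p t = (if 2 \<le> t \<and> t \<le> p then 2*p+1-t else t)"

definition N1 :: "nat \<Rightarrow> nat \<Rightarrow> bool \<times> nat" where "N1 p t = (t \<le> p, rep p t)"
definition N2 :: "nat \<Rightarrow> nat \<Rightarrow> bool \<times> nat" where "N2 p t = (\<not> t \<le> p, rep p t)"
definition Iset :: "nat \<Rightarrow> (bool \<times> nat) set" where "Iset p = UNIV \<times> {p+1..2*p-1}"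
definition exf :: "mi \<Rightarrow> mi \<Rightarrow> bool \<times> nat \<Rightarrow> nat" where "exf a b = (\<lambda>(r, s). if r then a s else b s)"

lemma F1: "p \<ge> 2 \<Longrightarrow> t \<in> {1..2*p} \<Longrightarrow> ((r, rep p t) \<in> Iset p) = (t \<in> {2..2*p-1})"
  unfolding Iset_def rep_def by auto

lemma F2: "p \<ge> 2 \<Longrightarrow> t \<in> {1..2*p} \<Longrightarrow> t \<notin> {2..2*p-1} \<Longrightarrow> rep p t = t"
  unfolding rep_def by auto

lemma F3: "p \<ge> 2 \<Longrightarrow> s \<in> {2..2*p-1} \<Longrightarrow> rep p s = s \<or> rep p s = 2*p+1-s"
  unfolding rep_def by auto

lemma F3b: "p \<ge> 2 \<Longrightarrow> s \<in> {2..2*p-1} \<Longrightarrow> rep p (2*p+1-s) = rep p s"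
  unfolding rep_def by auto

lemma F4: "p \<ge> 2 \<Longrightarrow> u \<in> {p+1..2*p-1} \<Longrightarrow> u \<in> {2..2*p-1} \<and> rep p u = u"
  unfolding rep_def by auto

lemma F5: "p \<ge> 2 \<Longrightarrow> s \<in> {2..2*p-1} \<Longrightarrow> rep p s \<in> {p+1..2*p-1}"
  unfolding rep_def by auto

definition Phi :: "nat \<Rightarrow> mi \<Rightarrow> (nat \<Rightarrow> nat) \<Rightarrow> mi" where
  "Phi p a w = (\<lambda>s. if s \<in> {2..2*p-1} then w (rep p s) else a s)"

lemma Phi_in:
  assumes p: "p \<ge> 2" and a: "a \<in> idx {1, 2*p} d" and w: "w \<in> PiE (Iset p) (\<lambda>_. {..<d})"
  shows "Phi p a (\<lambda>s. w (r, s)) \<in> Gs p d a"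
proof -
  let ?m = "\<lambda>s. if s \<in> {2..2*p-1} then w (r, rep p s) else undefined"
  have m: "?m \<in> idx {2..2*p-1} d"
  proof -
    have "\<forall>s\<in>{2..2*p-1}. ?m s \<in> {..<d}"
    proof
      fix s assume s: "s \<in> {2..2*p-1}"
      have "(r, rep p s) \<in> Iset p" using F5[OF p s] unfolding Iset_def by auto
      then show "?m s \<in> {..<d}" using w s by (auto simp: PiE_iff)
    qed
    then show ?thesis unfolding idx_def PiE_iff extensional_def by auto
  qed
  have pm: "pc p ?m" unfolding pc_def using F3b[OF p] M_refl by auto
  have eq: "Phi p a (\<lambda>s. w (r, s)) = (\<lambda>k. if k \<in> {2..2*p-1} then ?m k else a k)"
    unfolding Phi_def by auto
  have "(\<lambda>k. if k \<in> {2..2*p-1} then ?m k else a k) \<in> Gs p d a"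
  proof -
    have "(\<lambda>k. if k \<in> {2..2*p-1} then ?m k else a k) \<in> idx {1..2*p} d"
      by (rule phi_idx[OF _ a m]) (use p in simp)
    moreover have "pc p (\<lambda>k. if k \<in> {2..2*p-1} then ?m k else a k)" using pm unfolding phi_pc .
    moreover have "\<forall>s\<in>{1, 2*p}. (\<lambda>k. if k \<in> {2..2*p-1} then ?m k else a k) s = a s" using p by auto
    ultimately show ?thesis unfolding Gs_def by blast
  qed
  then show ?thesis unfolding eq .
qed

lemma Phi_bij:
  assumes p: "p \<ge> 2" and a: "a \<in> idx {1, 2*p} d" and b: "b \<in> idx {1, 2*p} d"
  shows "bij_betw (\<lambda>w. (Phi p a (\<lambda>s. w (True, s)), Phi p b (\<lambda>s. w (False, s))))
     (PiE (Iset p) (\<lambda>_. {..<d})) (Gs p d a \<times> Gs p d b)"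
proof (rule bij_betw_byWitness[where f' = "\<lambda>(l, l'). (\<lambda>(r, u). if (r, u) \<in> Iset p then (if r then l u else l' u) else undefined)"])
  let ?M = "{2..2*p-1}"
  show "\<forall>w\<in>PiE (Iset p) (\<lambda>_. {..<d}). (\<lambda>(l, l'). (\<lambda>(r, u). if (r, u) \<in> Iset p then (if r then l u else l' u) else undefined))
      (Phi p a (\<lambda>s. w (True, s)), Phi p b (\<lambda>s. w (False, s))) = w"
  proof
    fix w assume w: "w \<in> PiE (Iset p) (\<lambda>_. {..<d})"
    show "(\<lambda>(l, l'). (\<lambda>(r, u). if (r, u) \<in> Iset p then (if r then l u else l' u) else undefined))
      (Phi p a (\<lambda>s. w (True, s)), Phi p b (\<lambda>s. w (False, s))) = w"
    proof
      fix x :: "bool \<times> nat"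
      obtain r u where x: "x = (r, u)" by (cases x)
      show "(\<lambda>(l, l'). (\<lambda>(r, u). if (r, u) \<in> Iset p then (if r then l u else l' u) else undefined))
        (Phi p a (\<lambda>s. w (True, s)), Phi p b (\<lambda>s. w (False, s))) x = w x"
      proof (cases "(r, u) \<in> Iset p")
        case True
        then have "u \<in> {p+1..2*p-1}" unfolding Iset_def by auto
        then have "u \<in> ?M" "rep p u = u" using F4[OF p] by auto
        then show ?thesis using True unfolding x Phi_def by auto
      next
        case False
        then have "w (r, u) = undefined" using w by (auto simp: PiE_iff extensional_def)
        then show ?thesis using False unfolding x by auto
      qed
    qed
  qed
  show "\<forall>y\<in>Gs p d a \<times> Gs p d b. (\<lambda>w. (Phi p a (\<lambda>s. w (True, s)), Phi p b (\<lambda>s. w (False, s))))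
       ((\<lambda>(l, l'). (\<lambda>(r, u). if (r, u) \<in> Iset p then (if r then l u else l' u) else undefined)) y) = y"
  proof
    fix y assume y: "y \<in> Gs p d a \<times> Gs p d b"
    obtain l l' where yl: "y = (l, l')" by (cases y)
    have bk: "Phi p c (\<lambda>s. if (r, s) \<in> Iset p then g s else undefined) = g"
      if g: "g \<in> Gs p d c" and c: "c \<in> idx {1, 2*p} d" for c g r
    proof
      fix s
      have gi: "g \<in> idx {1..2*p} d" and gp: "pc p g" and gE: "\<forall>s\<in>{1, 2*p}. g s = c s" using g unfolding Gs_def by auto
      show "Phi p c (\<lambda>s. if (r, s) \<in> Iset p then g s else undefined) s = g s"
      proof (cases "s \<in> ?M")
        case True
        have "(r, rep p s) \<in> Iset p" using F5[OF p True] unfolding Iset_def by auto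
        moreover have "g (rep p s) = g s"
          using F3[OF p True] gp True unfolding pc_def by auto
        ultimately show ?thesis using True unfolding Phi_def by auto
      next
        case False
        have "c s = g s"
        proof (cases "s \<in> {1..2*p}")
          case True
          then have "s = 1 \<or> s = 2*p" using SM[of p s] p False by auto
          then show ?thesis using gE by auto
        next
          case F2: False
          then have "s \<notin> {1, 2*p}" using p by auto
          then show ?thesis using idx_undef[OF gi F2] idx_undef[OF c] by auto
        qed
        then show ?thesis using False unfolding Phi_def by auto
      qed
    qed
    have l: "l \<in> Gs p d a" and l': "l' \<in> Gs p d b" using y yl by auto
    have "(\<lambda>(r, u). if (r, u) \<in> Iset p then (if r then l u else l' u) else undefined) = w0" if "w0 = (\<lambda>(r, u). if (r, u) \<in> Iset p then (if r then l u else l' u) else undefined)" for w0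
      using that by simp
    have e1: "(\<lambda>s. (\<lambda>(r, u). if (r, u) \<in> Iset p then (if r then l u else l' u) else undefined) (True, s)) = (\<lambda>s. if (True, s) \<in> Iset p then l s else undefined)"
      by auto
    have e2: "(\<lambda>s. (\<lambda>(r, u). if (r, u) \<in> Iset p then (if r then l u else l' u) else undefined) (False, s)) = (\<lambda>s. if (False, s) \<in> Iset p then l' s else undefined)"
      by auto
    show "(\<lambda>w. (Phi p a (\<lambda>s. w (True, s)), Phi p b (\<lambda>s. w (False, s))))
       ((\<lambda>(l, l'). (\<lambda>(r, u). if (r, u) \<in> Iset p then (if r then l u else l' u) else undefined)) y) = y"
      unfolding yl by (simp only: prod.case if_True if_False bk[OF l a] bk[OF l' b])
  qed
  show "(\<lambda>w. (Phi p a (\<lambda>s. w (True, s)), Phi p b (\<lambda>s. w (False, s)))) ` PiE (Iset p) (\<lambda>_. {..<d}) \<subseteq> Gs p d a \<times> Gs p d b"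
    using Phi_in[OF p a] Phi_in[OF p b] by auto
  show "(\<lambda>(l, l'). (\<lambda>(r, u). if (r, u) \<in> Iset p then (if r then l u else l' u) else undefined)) ` (Gs p d a \<times> Gs p d b)
     \<subseteq> PiE (Iset p) (\<lambda>_. {..<d})"
  proof
    fix w assume "w \<in> (\<lambda>(l, l'). (\<lambda>(r, u). if (r, u) \<in> Iset p then (if r then l u else l' u) else undefined)) ` (Gs p d a \<times> Gs p d b)"
    then obtain l l' where l: "l \<in> Gs p d a" "l' \<in> Gs p d b" and wl: "w = (\<lambda>(r, u). if (r, u) \<in> Iset p then (if r then l u else l' u) else undefined)"
      by auto
    have li: "l \<in> idx {1..2*p} d" "l' \<in> idx {1..2*p} d" using l unfolding Gs_def by auto
    have "\<forall>x\<in>Iset p. w x \<in> {..<d}"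
    proof
      fix x assume x: "x \<in> Iset p"
      obtain r u where xr: "x = (r, u)" by (cases x)
      then have "u \<in> {1..2*p}" using x unfolding Iset_def by auto
      then show "w x \<in> {..<d}" using idx_lt[OF li(1)] idx_lt[OF li(2)] x unfolding wl xr by auto
    qed
    moreover have "\<forall>x. x \<notin> Iset p \<longrightarrow> w x = undefined" unfolding wl by auto
    ultimately show "w \<in> PiE (Iset p) (\<lambda>_. {..<d})" unfolding PiE_iff extensional_def by blast
  qed
qed

lemma Tform:
  "fold ptrans1 [p+1..<2*p+1] (permop S \<pi>) l l' =
   (if \<forall>s\<in>S. (if \<pi> s \<in> {p+1..<2*p+1} then l' (\<pi> s) else l (\<pi> s)) = (if s \<in> {p+1..<2*p+1} then l s else l' s) then 1 else 0)"
  by (simp only: fold_ptrans[OF distinct_upt] permop_def set_upt)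

lemma xy_vl:
  assumes p: "p \<ge> 2" and t: "t \<in> {1..2*p}"
  shows "(if t \<in> {p+1..<2*p+1} then Phi p b (\<lambda>s. w (False, s)) t else Phi p a (\<lambda>s. w (True, s)) t)
     = vl (Iset p) w (exf a b) (N1 p t)"
    and "(if t \<in> {p+1..<2*p+1} then Phi p a (\<lambda>s. w (True, s)) t else Phi p b (\<lambda>s. w (False, s)) t)
     = vl (Iset p) w (exf a b) (N2 p t)"
proof -
  have f1: "\<And>r. ((r, rep p t) \<in> Iset p) = (t \<in> {2..2*p-1})" using F1[OF p t] .
  have f2: "t \<notin> {2..2*p-1} \<Longrightarrow> rep p t = t" using F2[OF p t] .
  show "(if t \<in> {p+1..<2*p+1} then Phi p b (\<lambda>s. w (False, s)) t else Phi p a (\<lambda>s. w (True, s)) t)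
     = vl (Iset p) w (exf a b) (N1 p t)"
  proof (cases "t \<le> p")
    case True
    then have "t \<notin> {p+1..<2*p+1}" by auto
    then show ?thesis using True f1 f2 unfolding Phi_def vl_def N1_def exf_def by auto
  next
    case False
    then have "t \<in> {p+1..<2*p+1}" using t by auto
    then show ?thesis using False f1 f2 unfolding Phi_def vl_def N1_def exf_def by auto
  qed
  show "(if t \<in> {p+1..<2*p+1} then Phi p a (\<lambda>s. w (True, s)) t else Phi p b (\<lambda>s. w (False, s)) t)
     = vl (Iset p) w (exf a b) (N2 p t)"
  proof (cases "t \<le> p")
    case True
    then have "t \<notin> {p+1..<2*p+1}" by auto
    then show ?thesis using True f1 f2 unfolding Phi_def vl_def N2_def exf_def by auto
  next
    case False
    then have "t \<in> {p+1..<2*p+1}" using t by auto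
    then show ?thesis using False f1 f2 unfolding Phi_def vl_def N2_def exf_def by auto
  qed
qed

lemma Ysum:
  assumes p: "p \<ge> 2" and pi: "\<pi> permutes {1..2*p}" and a: "a \<in> idx {1, 2*p} d" and b: "b \<in> idx {1, 2*p} d"
  shows "(\<Sum>l\<in>Gs p d a. \<Sum>l'\<in>Gs p d b. fold ptrans1 [p+1..<2*p+1] (permop {1..2*p} \<pi>) l l')
    = (\<Sum>w\<in>PiE (Iset p) (\<lambda>_. {..<d}).
        (if \<forall>s\<in>{1..2*p}. vl (Iset p) w (exf a b) (N1 p (\<pi> s)) = vl (Iset p) w (exf a b) (N2 p s) then 1 else 0))"
proof -
  let ?T = "fold ptrans1 [p+1..<2*p+1] (permop {1..2*p} \<pi>)"
  have "(\<Sum>l\<in>Gs p d a. \<Sum>l'\<in>Gs p d b. ?T l l') = (\<Sum>y\<in>Gs p d a \<times> Gs p d b. ?T (fst y) (snd y))"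
    by (simp add: sum.cartesian_product split_def)
  also have "\<dots> = (\<Sum>w\<in>PiE (Iset p) (\<lambda>_. {..<d}). ?T (Phi p a (\<lambda>s. w (True, s))) (Phi p b (\<lambda>s. w (False, s))))"
    using sum.reindex_bij_betw[OF Phi_bij[OF p a b], of "\<lambda>y. ?T (fst y) (snd y)"] by simp
  also have "\<dots> = (\<Sum>w\<in>PiE (Iset p) (\<lambda>_. {..<d}).
        (if \<forall>s\<in>{1..2*p}. vl (Iset p) w (exf a b) (N1 p (\<pi> s)) = vl (Iset p) w (exf a b) (N2 p s) then 1 else 0))"
  proof (rule sum.cong[OF refl])
    fix w
    have "(\<forall>s\<in>{1..2*p}. (if \<pi> s \<in> {p+1..<2*p+1} then Phi p b (\<lambda>s. w (False, s)) (\<pi> s) else Phi p a (\<lambda>s. w (True, s)) (\<pi> s))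
         = (if s \<in> {p+1..<2*p+1} then Phi p a (\<lambda>s. w (True, s)) s else Phi p b (\<lambda>s. w (False, s)) s))
      = (\<forall>s\<in>{1..2*p}. vl (Iset p) w (exf a b) (N1 p (\<pi> s)) = vl (Iset p) w (exf a b) (N2 p s))"
    proof (rule ball_cong[OF refl])
      fix s assume s: "s \<in> {1..2*p}"
      have ps: "\<pi> s \<in> {1..2*p}" using s permutes_in_image[OF pi, of s] by blast
      show "((if \<pi> s \<in> {p+1..<2*p+1} then Phi p b (\<lambda>s. w (False, s)) (\<pi> s) else Phi p a (\<lambda>s. w (True, s)) (\<pi> s))
         = (if s \<in> {p+1..<2*p+1} then Phi p a (\<lambda>s. w (True, s)) s else Phi p b (\<lambda>s. w (False, s)) s))
        = (vl (Iset p) w (exf a b) (N1 p (\<pi> s)) = vl (Iset p) w (exf a b) (N2 p s))"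
        unfolding xy_vl(1)[OF p ps] xy_vl(2)[OF p s] ..
    qed
    then show "?T (Phi p a (\<lambda>s. w (True, s))) (Phi p b (\<lambda>s. w (False, s))) =
        (if \<forall>s\<in>{1..2*p}. vl (Iset p) w (exf a b) (N1 p (\<pi> s)) = vl (Iset p) w (exf a b) (N2 p s) then 1 else 0)"
      unfolding Tform by simp
  qed
  finally show ?thesis .
qed

lemma N1_inj: "p \<ge> 2 \<Longrightarrow> inj_on (N1 p) {1..2*p}"
  unfolding inj_on_def N1_def rep_def by (auto split: if_splits)

lemma N2_inj: "p \<ge> 2 \<Longrightarrow> inj_on (N2 p) {1..2*p}"
  unfolding inj_on_def N2_def rep_def by (auto split: if_splits)

lemma N1_img:
  assumes p: "p \<ge> 2"
  shows "N1 p ` {1..2*p} = Iset p \<union> {(True, 1), (False, 2*p)}"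
proof
  show "N1 p ` {1..2*p} \<subseteq> Iset p \<union> {(True, 1), (False, 2*p)}"
  proof
    fix x assume "x \<in> N1 p ` {1..2*p}"
    then obtain t where t: "t \<in> {1..2*p}" and x: "x = N1 p t" by auto
    show "x \<in> Iset p \<union> {(True, 1), (False, 2*p)}"
    proof (cases "t \<in> {2..2*p-1}")
      case True
      then have "(t \<le> p, rep p t) \<in> Iset p" using F1[OF p t] by blast
      then show ?thesis unfolding x N1_def by blast
    next
      case False
      then have "t = 1 \<or> t = 2*p" using SM[of p t] p t by auto
      then show ?thesis unfolding x N1_def rep_def using p by auto
    qed
  qed
  show "Iset p \<union> {(True, 1), (False, 2*p)} \<subseteq> N1 p ` {1..2*p}"
  proof
    fix x assume x: "x \<in> Iset p \<union> {(True, 1), (False, 2*p)}"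
    show "x \<in> N1 p ` {1..2*p}"
    proof (cases "x \<in> Iset p")
      case True
      then obtain r u where xr: "x = (r, u)" and u: "u \<in> {p+1..2*p-1}" unfolding Iset_def by auto
      show ?thesis
      proof (cases r)
        case True
        have "N1 p (2*p+1-u) = x" unfolding N1_def rep_def xr using True u by auto
        moreover have "2*p+1-u \<in> {1..2*p}" using u by auto
        ultimately show ?thesis by (metis image_eqI)
      next
        case False
        have "N1 p u = x" unfolding N1_def rep_def xr using False u by auto
        moreover have "u \<in> {1..2*p}" using u by auto
        ultimately show ?thesis by (metis image_eqI)
      qed
    next
      case False
      then have "x = (True, 1) \<or> x = (False, 2*p)" using x by auto
      moreover have "N1 p 1 = (True, 1)" "N1 p (2*p) = (False, 2*p)" unfolding N1_def rep_def using p by auto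
      moreover have "1 \<in> {1..2*p}" "2*p \<in> {1..2*p}" using p by auto
      ultimately show ?thesis by (metis image_eqI)
    qed
  qed
qed

lemma N2_img:
  assumes p: "p \<ge> 2"
  shows "N2 p ` {1..2*p} = Iset p \<union> {(False, 1), (True, 2*p)}"
proof
  show "N2 p ` {1..2*p} \<subseteq> Iset p \<union> {(False, 1), (True, 2*p)}"
  proof
    fix x assume "x \<in> N2 p ` {1..2*p}"
    then obtain t where t: "t \<in> {1..2*p}" and x: "x = N2 p t" by auto
    show "x \<in> Iset p \<union> {(False, 1), (True, 2*p)}"
    proof (cases "t \<in> {2..2*p-1}")
      case True
      then have "(\<not> t \<le> p, rep p t) \<in> Iset p" using F1[OF p t] by blast
      then show ?thesis unfolding x N2_def by blast
    next
      case False
      then have "t = 1 \<or> t = 2*p" using SM[of p t] p t by auto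
      then show ?thesis unfolding x N2_def rep_def using p by auto
    qed
  qed
  show "Iset p \<union> {(False, 1), (True, 2*p)} \<subseteq> N2 p ` {1..2*p}"
  proof
    fix x assume x: "x \<in> Iset p \<union> {(False, 1), (True, 2*p)}"
    show "x \<in> N2 p ` {1..2*p}"
    proof (cases "x \<in> Iset p")
      case True
      then obtain r u where xr: "x = (r, u)" and u: "u \<in> {p+1..2*p-1}" unfolding Iset_def by auto
      show ?thesis
      proof (cases r)
        case False
        have "N2 p (2*p+1-u) = x" unfolding N2_def rep_def xr using False u by auto
        moreover have "2*p+1-u \<in> {1..2*p}" using u by auto
        ultimately show ?thesis by (metis image_eqI)
      next
        case True
        have "N2 p u = x" unfolding N2_def rep_def xr using True u by auto
        moreover have "u \<in> {1..2*p}" using u by auto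
        ultimately show ?thesis by (metis image_eqI)
      qed
    next
      case False
      then have "x = (False, 1) \<or> x = (True, 2*p)" using x by auto
      moreover have "N2 p 1 = (False, 1)" "N2 p (2*p) = (True, 2*p)" unfolding N2_def rep_def using p by auto
      moreover have "1 \<in> {1..2*p}" "2*p \<in> {1..2*p}" using p by auto
      ultimately show ?thesis by (metis image_eqI)
    qed
  qed
qed

lemma Ycases:
  assumes p: "p \<ge> 2" and pi: "\<pi> permutes {1..2*p}"
  shows "\<exists>\<alpha> \<beta>. \<forall>a\<in>idx {1, 2*p} d. \<forall>b\<in>idx {1, 2*p} d.
    (\<Sum>l\<in>Gs p d a. \<Sum>l'\<in>Gs p d b. fold ptrans1 [p+1..<2*p+1] (permop {1..2*p} \<pi>) l l')
      = \<alpha> * ident {1, 2*p} a b + \<beta> * Wop {1, 2*p} 1 (2*p) a b"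
proof -
  let ?S = "{1..2*p}"
  let ?Src = "{(True, 1), (False, 2*p)}"
  let ?Snk = "{(False, 1), (True, 2*p)}"
  have fin: "finite (Iset p)" unfolding Iset_def by simp
  have inj1: "inj_on (N1 p \<circ> \<pi>) ?S"
  proof (rule comp_inj_on)
    show "inj_on \<pi> ?S" using pi by (rule permutes_inj_on)
    show "inj_on (N1 p) (\<pi> ` ?S)" unfolding permutes_image[OF pi] by (rule N1_inj[OF p])
  qed
  have img1: "(N1 p \<circ> \<pi>) ` ?S = Iset p \<union> ?Src"
  proof -
    have "(N1 p \<circ> \<pi>) ` ?S = N1 p ` (\<pi> ` ?S)" by (rule image_comp[symmetric])
    also have "\<dots> = N1 p ` ?S" unfolding permutes_image[OF pi] ..
    finally show ?thesis using N1_img[OF p] by simp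
  qed
  have d1: "Iset p \<inter> ?Src = {}" "Iset p \<inter> ?Snk = {}" unfolding Iset_def using p by auto
  obtain c h where h: "bij_betw h ?Src ?Snk" and H: "\<forall>ext. (\<forall>x\<in>?Src \<union> ?Snk. ext x < d) \<longrightarrow>
      (\<Sum>w\<in>PiE (Iset p) (\<lambda>_. {..<d}). (if \<forall>e\<in>?S. vl (Iset p) w ext ((N1 p \<circ> \<pi>) e) = vl (Iset p) w ext (N2 p e) then 1 else 0))
       = (of_nat d :: complex) ^ c * (if \<forall>x\<in>?Src. ext x = ext (h x) then 1 else 0)"
    using graph_elim[OF fin, of ?S "N1 p \<circ> \<pi>" "N2 p" ?Src ?Snk d] inj1 img1 N2_inj[OF p] N2_img[OF p] d1
    by auto
  have Y: "(\<Sum>l\<in>Gs p d a. \<Sum>l'\<in>Gs p d b. fold ptrans1 [p+1..<2*p+1] (permop ?S \<pi>) l l')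
     = (of_nat d :: complex) ^ c * (if \<forall>x\<in>?Src. exf a b x = exf a b (h x) then 1 else 0)"
    if a: "a \<in> idx {1, 2*p} d" and b: "b \<in> idx {1, 2*p} d" for a b
  proof -
    have "\<forall>x\<in>?Src \<union> ?Snk. exf a b x < d"
      using idx_lt[OF a] idx_lt[OF b] unfolding exf_def by auto
    then show ?thesis unfolding Ysum[OF p pi a b] using H by simp
  qed
  have hT: "h (True, 1) \<in> ?Snk" and hF: "h (False, 2*p) \<in> ?Snk" using h unfolding bij_betw_def by auto
  have hne: "h (True, 1) \<noteq> h (False, 2*p)" using h unfolding bij_betw_def inj_on_def by auto
  have p1: "1 \<noteq> 2*p" using p by auto
  show ?thesis
  proof (cases "h (True, 1) = (False, 1)")
    case True
    then have h2: "h (False, 2*p) = (True, 2*p)" using hF hne by auto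
    show ?thesis
    proof (rule exI[of _ "(of_nat d :: complex) ^ c"], rule exI[of _ "0::complex"], intro ballI)
      fix a b assume a: "a \<in> idx {1, 2*p} d" and b: "b \<in> idx {1, 2*p} d"
      have "(\<forall>x\<in>?Src. exf a b x = exf a b (h x)) = (\<forall>k\<in>{1, 2*p}. a k = b k)"
        using True h2 unfolding exf_def by auto
      then show "(\<Sum>l\<in>Gs p d a. \<Sum>l'\<in>Gs p d b. fold ptrans1 [p+1..<2*p+1] (permop ?S \<pi>) l l')
        = (of_nat d :: complex) ^ c * ident {1, 2*p} a b + 0 * Wop {1, 2*p} 1 (2*p) a b"
        unfolding Y[OF a b] ident_def by simp
    qed
  next
    case False
    then have h1: "h (True, 1) = (True, 2*p)" using hT by auto
    then have h2: "h (False, 2*p) = (False, 1)" using hF hne by auto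
    show ?thesis
    proof (rule exI[of _ "0::complex"], rule exI[of _ "(of_nat d :: complex) ^ c"], intro ballI)
      fix a b assume a: "a \<in> idx {1, 2*p} d" and b: "b \<in> idx {1, 2*p} d"
      have "(\<forall>x\<in>?Src. exf a b x = exf a b (h x)) = (a 1 = a (2*p) \<and> b 1 = b (2*p) \<and> (\<forall>k\<in>{1, 2*p} - {1, 2*p}. a k = b k))"
        using h1 h2 unfolding exf_def by auto
      then show "(\<Sum>l\<in>Gs p d a. \<Sum>l'\<in>Gs p d b. fold ptrans1 [p+1..<2*p+1] (permop ?S \<pi>) l l')
        = 0 * ident {1, 2*p} a b + (of_nat d :: complex) ^ c * Wop {1, 2*p} 1 (2*p) a b"
        unfolding Y[OF a b] Wop_def by simp
    qed
  qed
qed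

theorem fact6:
  fixes d p :: nat and X :: op
  assumes "d \<ge> 2" and "p \<ge> 2" and "in_Apq d p X"
  defines "Xt \<equiv> ptrace {2..2*p-1} d (opmult {1..2*p} d X (Vprod {1..2*p} d p))"
  shows "in_A11 {1, 2*p} 1 (2*p) d Xt \<and>
    (\<forall>i\<in>idx {1..2*p} d. \<forall>j\<in>idx {1..2*p} d.
       opmult {1..2*p} d (opmult {1..2*p} d (Vprod {1..2*p} d p) X) (Vprod {1..2*p} d p) i j
       = optensor {1, 2*p} {2..2*p-1} Xt (Vprod {2..2*p-1} d p) i j)"
proof
  have p: "p \<ge> 2" by fact
  have p1: "p \<ge> 1" using p by simp
  show "\<forall>i\<in>idx {1..2*p} d. \<forall>j\<in>idx {1..2*p} d.
       opmult {1..2*p} d (opmult {1..2*p} d (Vprod {1..2*p} d p) X) (Vprod {1..2*p} d p) i j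
       = optensor {1, 2*p} {2..2*p-1} Xt (Vprod {2..2*p-1} d p) i j"
    unfolding Xt_def using partB[OF p1] by blast
  let ?P = "{\<pi>. \<pi> permutes {1..2*p}}"
  let ?T = "\<lambda>\<pi>. fold ptrans1 [p+1..<2*p+1] (permop {1..2*p} \<pi>)"
  obtain c where c: "\<forall>i\<in>idx {1..2*p} d. \<forall>j\<in>idx {1..2*p} d. X i j = (\<Sum>\<pi>\<in>?P. c \<pi> * ?T \<pi> i j)"
    using assms(3) unfolding in_Apq_def by blast
  have "\<forall>\<pi>\<in>?P. \<exists>ab. \<forall>a\<in>idx {1, 2*p} d. \<forall>b\<in>idx {1, 2*p} d.
      (\<Sum>l\<in>Gs p d a. \<Sum>l'\<in>Gs p d b. ?T \<pi> l l') = fst ab * ident {1, 2*p} a b + snd ab * Wop {1, 2*p} 1 (2*p) a b"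
  proof
    fix \<pi> assume "\<pi> \<in> ?P"
    then have pi: "\<pi> permutes {1..2*p}" by simp
    from Ycases[OF p pi, of d] obtain \<alpha> \<beta> where "\<forall>a\<in>idx {1, 2*p} d. \<forall>b\<in>idx {1, 2*p} d.
      (\<Sum>l\<in>Gs p d a. \<Sum>l'\<in>Gs p d b. ?T \<pi> l l') = \<alpha> * ident {1, 2*p} a b + \<beta> * Wop {1, 2*p} 1 (2*p) a b"
      by blast
    then show "\<exists>ab. \<forall>a\<in>idx {1, 2*p} d. \<forall>b\<in>idx {1, 2*p} d.
      (\<Sum>l\<in>Gs p d a. \<Sum>l'\<in>Gs p d b. ?T \<pi> l l') = fst ab * ident {1, 2*p} a b + snd ab * Wop {1, 2*p} 1 (2*p) a b"
      by (intro exI[of _ "(\<alpha>, \<beta>)"]) simp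
  qed
  then obtain f where f: "\<And>\<pi> a b. \<pi> \<in> ?P \<Longrightarrow> a \<in> idx {1, 2*p} d \<Longrightarrow> b \<in> idx {1, 2*p} d \<Longrightarrow>
      (\<Sum>l\<in>Gs p d a. \<Sum>l'\<in>Gs p d b. ?T \<pi> l l') = fst (f \<pi>) * ident {1, 2*p} a b + snd (f \<pi>) * Wop {1, 2*p} 1 (2*p) a b"
    using bchoice by metis
  show "in_A11 {1, 2*p} 1 (2*p) d Xt"
    unfolding in_A11_def
  proof (rule exI[of _ "\<Sum>\<pi>\<in>?P. c \<pi> * fst (f \<pi>)"], rule exI[of _ "\<Sum>\<pi>\<in>?P. c \<pi> * snd (f \<pi>)"], intro ballI)
    fix a b assume a: "a \<in> idx {1, 2*p} d" and b: "b \<in> idx {1, 2*p} d"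
    have "Xt a b = (\<Sum>l\<in>Gs p d a. \<Sum>l'\<in>Gs p d b. X l l')"
      unfolding Xt_def by (rule XtF[OF p1 a b])
    also have "\<dots> = (\<Sum>l\<in>Gs p d a. \<Sum>l'\<in>Gs p d b. \<Sum>\<pi>\<in>?P. c \<pi> * ?T \<pi> l l')"
    proof (intro sum.cong refl)
      fix l l' assume "l \<in> Gs p d a" "l' \<in> Gs p d b"
      then have "l \<in> idx {1..2*p} d" "l' \<in> idx {1..2*p} d" using Gs_sub by auto
      then show "X l l' = (\<Sum>\<pi>\<in>?P. c \<pi> * ?T \<pi> l l')" using c by blast
    qed
    also have "\<dots> = (\<Sum>l\<in>Gs p d a. \<Sum>\<pi>\<in>?P. \<Sum>l'\<in>Gs p d b. c \<pi> * ?T \<pi> l l')"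
      by (rule sum.cong[OF refl], rule sum.swap)
    also have "\<dots> = (\<Sum>\<pi>\<in>?P. \<Sum>l\<in>Gs p d a. \<Sum>l'\<in>Gs p d b. c \<pi> * ?T \<pi> l l')"
      by (rule sum.swap)
    also have "\<dots> = (\<Sum>\<pi>\<in>?P. c \<pi> * (\<Sum>l\<in>Gs p d a. \<Sum>l'\<in>Gs p d b. ?T \<pi> l l'))"
      by (simp add: sum_distrib_left)
    also have "\<dots> = (\<Sum>\<pi>\<in>?P. c \<pi> * (fst (f \<pi>) * ident {1, 2*p} a b + snd (f \<pi>) * Wop {1, 2*p} 1 (2*p) a b))"
    proof (rule sum.cong[OF refl])
      fix \<pi> assume pi: "\<pi> \<in> ?P"
      show "c \<pi> * (\<Sum>l\<in>Gs p d a. \<Sum>l'\<in>Gs p d b. ?T \<pi> l l') = c \<pi> * (fst (f \<pi>) * ident {1, 2*p} a b + snd (f \<pi>) * Wop {1, 2*p} 1 (2*p) a b)"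
        using f[OF pi a b] by (simp only:)
    qed
    also have "\<dots> = (\<Sum>\<pi>\<in>?P. c \<pi> * fst (f \<pi>)) * ident {1, 2*p} a b + (\<Sum>\<pi>\<in>?P. c \<pi> * snd (f \<pi>)) * Wop {1, 2*p} 1 (2*p) a b"
      by (simp add: distrib_left sum.distrib sum_distrib_right mult.assoc)
    finally show "Xt a b = (\<Sum>\<pi>\<in>?P. c \<pi> * fst (f \<pi>)) * ident {1, 2*p} a b + (\<Sum>\<pi>\<in>?P. c \<pi> * snd (f \<pi>)) * Wop {1, 2*p} 1 (2*p) a b" .
  qed
qed

end
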